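(* Let $a,b$ be rational numbers with $a+b\in\mathbb{Z}$, and let $n$ be a nonnegative integer with $n\ge -(a+b)$. Then, as $z\to\infty$, $$\left(\frac{z-1}{2}\right)^a\left(\frac{z+1}{2}\right)^b J_n(a,b,z)-J_{n+a+b}(-a,-b,z)=O\big(z^{-(n+1)}\big),$$ i.e. the Laurent expansion at $\infty$ of the left-hand side contains only powers $z^j$ with $j\le -(n+1)$.
   Context: For a nonnegative integer $N$ and complex parameters $\alpha,\beta$, the (generalized) Jacobi polynomial is $$J_N(\alpha,\beta,x)=\sum_{j=0}^{N}\binom{N+\alpha+\beta+j}{j}\binom{N+\alpha}{N-j}\left(\frac{x-1}{2}\right)^j,$$ where $\binom{y}{j}=y(y-1)\cdots(y-j+1)/j!$ for arbitrary $y$. For rational $a,b$ with $a+b\in\mathbb Z$, the expression $(z-1)^a(z+1)^b$ denotes the single-valued function on $|z|>1$ given by $z^{a+b}(1-1/z)^a(1+1/z)^b$ (principal binomial series), i.e. the branch whose Laurent expansion at $\infty$ has leading term $z^{a+b}$ with coefficient $1$; and $\left(\frac{z-1}{2}\right)^a\left(\frac{z+1}{2}\right)^b$ means $2^{-(a+b)}(z-1)^a(z+1)^b$. Note $n+a+b$ is a nonnegative integer, so $J_{n+a+b}(-a,-b,z)$ is defined. *)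

theory Defs
  imports "HOL-Analysis.Analysis" "HOL-Library.Landau_Symbols"
begin

definition jacobiJ :: "nat \<Rightarrow> complex \<Rightarrow> complex \<Rightarrow> complex \<Rightarrow> complex" where
  "jacobiJ N \<alpha> \<beta> x =
     (\<Sum>j=0..N. ((of_nat N + \<alpha> + \<beta> + of_nat j) gchoose j)
               * ((of_nat N + \<alpha>) gchoose (N - j)) * ((x - 1) / 2) ^ j)"

text \<open>For rational a, b with a + b an integer, the branch of (z-1)^a (z+1)^b on |z| > 1
  given by z^(a+b) (1-1/z)^a (1+1/z)^b with principal powers (for |z|>1 the arguments
  1 -+ 1/z have positive real part, so principal powr agrees with the binomial series).\<close>
definition branchPow :: "rat \<Rightarrow> rat \<Rightarrow> complex \<Rightarrow> complex" where
  "branchPow a b z = z powi \<lfloor>a + b\<rfloor> * (1 - 1 / z) powr (of_rat a) * (1 + 1 / z) powr (of_rat b)"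

text \<open>((z-1)/2)^a ((z+1)/2)^b := 2^(-(a+b)) (z-1)^a (z+1)^b.\<close>
definition halfBranchPow :: "rat \<Rightarrow> rat \<Rightarrow> complex \<Rightarrow> complex" where
  "halfBranchPow a b z = 2 powi (- \<lfloor>a + b\<rfloor>) * branchPow a b z"

end

theory Submission
  imports Defs "HOL-Computational_Algebra.Formal_Power_Series"
begin

lemma gchoose_swap:
  fixes x :: complex
  shows "(x gchoose j) * ((x - of_nat j) gchoose k) = (x gchoose k) * ((x - of_nat k) gchoose j)"
proof -
  have 1: "(x gchoose (j+k)) * (of_nat (j+k) gchoose j) = (x gchoose j) * (x - of_nat j gchoose k)"
    using gbinomial_trinomial_revision[of j "j+k" x] by simp
  have 2: "(x gchoose (j+k)) * (of_nat (j+k) gchoose k) = (x gchoose k) * (x - of_nat k gchoose j)"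
    using gbinomial_trinomial_revision[of k "j+k" x] by simp
  have "(of_nat (j+k) gchoose j :: complex) = of_nat (j+k) gchoose k"
    by (metis add_diff_cancel_left' binomial_gbinomial binomial_symmetric le_add1)
  then show ?thesis using 1 2 by simp
qed

lemma vdm:
  fixes a b :: complex
  shows "(\<Sum>k\<le>n. (a gchoose k) * (b gchoose (n - k))) = (a + b) gchoose n"
  using gbinomial_Vandermonde[of a b n] by (simp add: atMost_atLeast0)

lemma coeffB:
  fixes \<alpha> \<beta> :: complex
  assumes "m \<le> n"
  shows "((of_nat n + \<alpha> + \<beta> + of_nat m) gchoose m) * ((of_nat n + \<alpha>) gchoose (n - m))
     = (\<Sum>j\<le>m. ((of_nat n + \<alpha>) gchoose (n - j)) * ((of_nat n + \<beta>) gchoose j) * of_nat ((n - j) choose (m - j)))"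
proof -
  have "((of_nat n + \<alpha>) gchoose (n - j)) * ((of_nat n + \<beta>) gchoose j) * of_nat ((n - j) choose (m - j))
      = ((of_nat n + \<alpha>) gchoose (n - m)) * (((of_nat n + \<beta>) gchoose j) * ((\<alpha> + of_nat m) gchoose (m - j)))"
    if j: "j \<le> m" for j
  proof -
    have "of_nat ((n - j) choose (m - j)) = (of_nat (n - j) gchoose (n - m) :: complex)"
    proof -
      have "(n - j) choose (m - j) = (n - j) choose (n - j - (m - j))"
        using j assms by (intro binomial_symmetric) simp
      also have "n - j - (m - j) = n - m" using j assms by simp
      finally show ?thesis by (simp add: binomial_gbinomial)
    qed
    moreover have "((of_nat n + \<alpha>) gchoose (n - j)) * (of_nat (n - j) gchoose (n - m))
        = ((of_nat n + \<alpha>) gchoose (n - m)) * ((of_nat n + \<alpha> - of_nat (n - m)) gchoose (n - j - (n - m)))"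
      using gbinomial_trinomial_revision[of "n - m" "n - j" "of_nat n + \<alpha>"] j assms by simp
    moreover have "of_nat n + \<alpha> - of_nat (n - m) = \<alpha> + (of_nat m :: complex)"
      using assms by (simp add: of_nat_diff)
    moreover have "n - j - (n - m) = m - j" using j assms by simp
    ultimately show ?thesis by (simp add: algebra_simps)
  qed
  note eq = this
  have "(\<Sum>j\<le>m. ((of_nat n + \<alpha>) gchoose (n - j)) * ((of_nat n + \<beta>) gchoose j) * of_nat ((n - j) choose (m - j)))
     = ((of_nat n + \<alpha>) gchoose (n - m)) * (\<Sum>j\<le>m. ((of_nat n + \<beta>) gchoose j) * ((\<alpha> + of_nat m) gchoose (m - j)))"
    unfolding sum_distrib_left by (intro sum.cong refl) (rule eq, simp)
  also have "(\<Sum>j\<le>m. ((of_nat n + \<beta>) gchoose j) * ((\<alpha> + of_nat m) gchoose (m - j))) = (of_nat n + \<alpha> + \<beta> + of_nat m) gchoose m"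
    by (subst vdm) (simp add: algebra_simps)
  finally show ?thesis by simp
qed

lemma coeffC:
  fixes \<alpha> \<beta> :: complex
  shows "(\<Sum>j\<le>n. ((of_nat n + \<alpha>) gchoose (n - j)) * ((of_nat n + \<beta>) gchoose j) * ((\<beta> + of_nat (n - j)) gchoose k))
     = ((of_nat n + \<beta>) gchoose k) * ((of_nat n + of_nat n + \<alpha> + \<beta> - of_nat k) gchoose n)"
proof -
  have "((of_nat n + \<alpha>) gchoose (n - j)) * ((of_nat n + \<beta>) gchoose j) * ((\<beta> + of_nat (n - j)) gchoose k)
     = ((of_nat n + \<beta>) gchoose k) * (((of_nat n + \<beta> - of_nat k) gchoose j) * ((of_nat n + \<alpha>) gchoose (n - j)))"
    if j: "j \<le> n" for j
  proof -
    have h: "\<beta> + of_nat (n - j) = of_nat n + \<beta> - of_nat j" using j by (simp add: of_nat_diff)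
    have S: "((of_nat n + \<beta>) gchoose j) * ((of_nat n + \<beta> - of_nat j) gchoose k)
       = ((of_nat n + \<beta>) gchoose k) * ((of_nat n + \<beta> - of_nat k) gchoose j)"
      by (rule gchoose_swap)
    have "((of_nat n + \<alpha>) gchoose (n - j)) * ((of_nat n + \<beta>) gchoose j) * ((\<beta> + of_nat (n - j)) gchoose k)
      = ((of_nat n + \<alpha>) gchoose (n - j)) * (((of_nat n + \<beta>) gchoose j) * ((of_nat n + \<beta> - of_nat j) gchoose k))"
      by (simp only: h mult.assoc)
    also have "\<dots> = ((of_nat n + \<alpha>) gchoose (n - j)) * (((of_nat n + \<beta>) gchoose k) * ((of_nat n + \<beta> - of_nat k) gchoose j))"
      by (simp only: S)
    finally show ?thesis by (simp only: mult_ac)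
  qed
  note eq = this
  have "(\<Sum>j\<le>n. ((of_nat n + \<alpha>) gchoose (n - j)) * ((of_nat n + \<beta>) gchoose j) * ((\<beta> + of_nat (n - j)) gchoose k))
     = ((of_nat n + \<beta>) gchoose k) * (\<Sum>j\<le>n. ((of_nat n + \<beta> - of_nat k) gchoose j) * ((of_nat n + \<alpha>) gchoose (n - j)))"
    unfolding sum_distrib_left by (intro sum.cong refl) (rule eq, simp)
  also have "(\<Sum>j\<le>n. ((of_nat n + \<beta> - of_nat k) gchoose j) * ((of_nat n + \<alpha>) gchoose (n - j))) = (of_nat n + of_nat n + \<alpha> + \<beta> - of_nat k) gchoose n"
    by (subst vdm) (simp add: algebra_simps)
  finally show ?thesis .
qed


lemma jacobi_alt:
  fixes \<alpha> \<beta> x :: complex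
  defines "t \<equiv> (x - 1) / 2"
  shows "jacobiJ n \<alpha> \<beta> x = (\<Sum>j\<le>n. ((of_nat n + \<alpha>) gchoose (n - j)) * ((of_nat n + \<beta>) gchoose j) * t ^ j * (1 + t) ^ (n - j))"
proof -
  define X where "X j = ((of_nat n + \<alpha>) gchoose (n - j)) * ((of_nat n + \<beta>) gchoose j)" for j
  define F where "F j m = (if j \<le> m then X j * of_nat ((n - j) choose (m - j)) * t ^ m else 0)" for j m
  have C1: "X j * t ^ j * (1 + t) ^ (n - j) = (\<Sum>m\<le>n. F j m)" if j: "j \<le> n" for j
  proof -
    have "(\<Sum>m\<le>n. F j m) = (\<Sum>m\<in>{j..n}. F j m)"
      by (rule sum.mono_neutral_right) (auto simp: F_def)
    also have "\<dots> = (\<Sum>m\<in>{0+j..(n-j)+j}. F j m)" using j by simp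
    also have "\<dots> = (\<Sum>i\<in>{0..n-j}. F j (i + j))" by (rule sum.shift_bounds_cl_nat_ivl)
    also have "\<dots> = (\<Sum>i\<le>n-j. X j * t ^ j * (of_nat ((n - j) choose i) * t ^ i * 1 ^ (n - j - i)))"
      by (intro sum.cong) (auto simp: F_def power_add atMost_atLeast0)
    also have "\<dots> = X j * t ^ j * (t + 1) ^ (n - j)"
      by (simp add: binomial_ring sum_distrib_left)
    finally show ?thesis by (simp add: add.commute)
  qed
  have C2: "(\<Sum>j\<le>n. F j m) = ((of_nat n + \<alpha> + \<beta> + of_nat m) gchoose m) * ((of_nat n + \<alpha>) gchoose (n - m)) * t ^ m"
    if m: "m \<le> n" for m
  proof -
    have "(\<Sum>j\<le>n. F j m) = (\<Sum>j\<le>m. F j m)"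
      using m by (intro sum.mono_neutral_right) (auto simp: F_def)
    also have "\<dots> = (\<Sum>j\<le>m. X j * of_nat ((n - j) choose (m - j))) * t ^ m"
      by (simp add: F_def sum_distrib_right)
    also have "\<dots> = ((of_nat n + \<alpha> + \<beta> + of_nat m) gchoose m) * ((of_nat n + \<alpha>) gchoose (n - m)) * t ^ m"
      using coeffB[OF m, of \<alpha> \<beta>] by (simp add: X_def)
    finally show ?thesis .
  qed
  have "(\<Sum>j\<le>n. X j * t ^ j * (1 + t) ^ (n - j)) = (\<Sum>j\<le>n. \<Sum>m\<le>n. F j m)"
    by (intro sum.cong refl) (simp add: C1)
  also have "\<dots> = (\<Sum>m\<le>n. \<Sum>j\<le>n. F j m)" by (rule sum.swap)
  also have "\<dots> = (\<Sum>m\<le>n. ((of_nat n + \<alpha> + \<beta> + of_nat m) gchoose m) * ((of_nat n + \<alpha>) gchoose (n - m)) * t ^ m)"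
    by (intro sum.cong refl) (simp add: C2)
  also have "\<dots> = jacobiJ n \<alpha> \<beta> x"
    by (simp add: jacobiJ_def t_def atMost_atLeast0)
  finally show ?thesis by (simp add: X_def)
qed


definition Xc :: "nat \<Rightarrow> complex \<Rightarrow> complex \<Rightarrow> nat \<Rightarrow> complex" where
  "Xc n \<alpha> \<beta> j = ((of_nat n + \<alpha>) gchoose (n - j)) * ((of_nat n + \<beta>) gchoose j)"
definition dc :: "nat \<Rightarrow> complex \<Rightarrow> complex \<Rightarrow> nat \<Rightarrow> complex" where
  "dc M \<alpha> \<beta> j = ((of_nat M + - \<alpha> + - \<beta> + of_nat j) gchoose j) * ((of_nat M + - \<alpha>) gchoose (M - j))"
definition gc :: "nat \<Rightarrow> nat \<Rightarrow> complex \<Rightarrow> complex \<Rightarrow> nat \<Rightarrow> complex" where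
  "gc n M \<alpha> \<beta> k = (\<Sum>j\<le>n. Xc n \<alpha> \<beta> j * ((\<beta> + of_nat (n - j)) gchoose k))
      - (if k \<le> M then dc M \<alpha> \<beta> (M - k) else 0)"
definition Fw :: "nat \<Rightarrow> nat \<Rightarrow> complex \<Rightarrow> complex \<Rightarrow> complex \<Rightarrow> complex" where
  "Fw n M \<alpha> \<beta> w = (\<Sum>j\<le>n. Xc n \<alpha> \<beta> j * (1 + w) powr (\<beta> + of_nat (n - j)))
      - (\<Sum>k\<le>M. dc M \<alpha> \<beta> (M - k) * w ^ k)"

lemma g_zero:
  assumes hM: "(of_nat M :: complex) = of_nat n + \<alpha> + \<beta>" and k: "k \<le> M + n"
  shows "gc n M \<alpha> \<beta> k = 0"
proof -
  have h1: "of_nat n + of_nat n + \<alpha> + \<beta> - of_nat k = (of_nat (n + M - k) :: complex)"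
    using hM k by (simp add: of_nat_diff algebra_simps)
  have e: "(\<Sum>j\<le>n. Xc n \<alpha> \<beta> j * ((\<beta> + of_nat (n - j)) gchoose k))
      = ((of_nat n + \<beta>) gchoose k) * (of_nat (n + M - k) gchoose n)"
    using coeffC[of n \<alpha> \<beta> k] unfolding h1 by (simp add: Xc_def mult.assoc)
  show ?thesis
  proof (cases "k \<le> M")
    case True
    have h2: "of_nat M + - \<alpha> + - \<beta> + of_nat (M - k) = (of_nat (n + M - k) :: complex)"
      using hM True by (simp add: of_nat_diff algebra_simps)
    have h3: "of_nat M + - \<alpha> = of_nat n + \<beta>" using hM by (simp add: algebra_simps)
    have h4: "M - (M - k) = k" using True by simp
    have h5: "(of_nat (n + M - k) gchoose n :: complex) = of_nat (n + M - k) gchoose (M - k)"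
    proof -
      have "(of_nat (n + M - k) gchoose n :: complex) = of_nat (n + M - k) gchoose (n + M - k - n)"
        using True by (intro gbinomial_of_nat_symmetric) simp
      also have "n + M - k - n = M - k" using True by simp
      finally show ?thesis .
    qed
    show ?thesis unfolding gc_def e dc_def h2 h3 h4 h5 using True by (simp add: algebra_simps)
  next
    case False
    have "(of_nat (n + M - k) gchoose n :: complex) = of_nat ((n + M - k) choose n)"
      by (simp add: binomial_gbinomial)
    also have "(n + M - k) choose n = 0" using False k by (intro binomial_eq_0) arith
    finally show ?thesis unfolding gc_def e using False by simp
  qed
qed

lemma Fw_sums:
  assumes w: "norm w < 1"
  shows "(\<lambda>k. gc n M \<alpha> \<beta> k * w ^ k) sums Fw n M \<alpha> \<beta> w"
proof -
  have s1: "(\<lambda>k. \<Sum>j\<le>n. Xc n \<alpha> \<beta> j * (((\<beta> + of_nat (n - j)) gchoose k) * w ^ k))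
      sums (\<Sum>j\<le>n. Xc n \<alpha> \<beta> j * (1 + w) powr (\<beta> + of_nat (n - j)))"
    by (intro sums_sum sums_mult gen_binomial_complex w)
  have s2: "(\<lambda>k. if k \<in> {..M} then dc M \<alpha> \<beta> (M - k) * w ^ k else 0) sums (\<Sum>k\<le>M. dc M \<alpha> \<beta> (M - k) * w ^ k)"
    by (rule sums_If_finite_set) simp
  have "(\<lambda>k. (\<Sum>j\<le>n. Xc n \<alpha> \<beta> j * (((\<beta> + of_nat (n - j)) gchoose k) * w ^ k))
          - (if k \<in> {..M} then dc M \<alpha> \<beta> (M - k) * w ^ k else 0)) sums Fw n M \<alpha> \<beta> w"
    unfolding Fw_def by (rule sums_diff[OF s1 s2])
  moreover have "(\<lambda>k. (\<Sum>j\<le>n. Xc n \<alpha> \<beta> j * (((\<beta> + of_nat (n - j)) gchoose k) * w ^ k))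
          - (if k \<in> {..M} then dc M \<alpha> \<beta> (M - k) * w ^ k else 0)) = (\<lambda>k. gc n M \<alpha> \<beta> k * w ^ k)"
    by (rule ext) (simp add: gc_def algebra_simps sum_distrib_left)
  ultimately show ?thesis by simp
qed

lemma Fw_bound:
  assumes hM: "(of_nat M :: complex) = of_nat n + \<alpha> + \<beta>"
  shows "\<exists>B. \<forall>w. norm w \<le> 1/2 \<longrightarrow> norm (Fw n M \<alpha> \<beta> w) \<le> B * norm w ^ (M + n + 1)"
proof -
  define N where "N = M + n + 1"
  define g where "g k = gc n M \<alpha> \<beta> (k + N)" for k
  have gz: "gc n M \<alpha> \<beta> k = 0" if "k < N" for k
    using g_zero[OF hM, of k] that by (simp add: N_def)
  have "summable (\<lambda>k. gc n M \<alpha> \<beta> k * (3/4 :: complex) ^ k)"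
    by (rule sums_summable[OF Fw_sums]) (simp add: norm_divide)
  hence "summable (\<lambda>k. gc n M \<alpha> \<beta> (k + N) * (3/4 :: complex) ^ (k + N))"
    by (rule summable_ignore_initial_segment)
  hence "summable (\<lambda>k. (g k * (3/4 :: complex) ^ k) * (3/4) ^ N)"
    by (simp add: g_def power_add mult_ac)
  hence "summable (\<lambda>k. (g k * (3/4 :: complex) ^ k) * (3/4) ^ N / (3/4) ^ N)"
    by (rule summable_divide)
  hence sg: "summable (\<lambda>k. g k * (3/4 :: complex) ^ k)" by simp
  have sn: "summable (\<lambda>k. norm (g k * (1/2 :: complex) ^ k))"
    by (rule powser_insidea[OF sg]) (simp add: norm_divide)
  define B where "B = (\<Sum>k. norm (g k * (1/2 :: complex) ^ k))"
  have "norm (Fw n M \<alpha> \<beta> w) \<le> B * norm w ^ N" if w: "norm w \<le> 1/2" for w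
  proof (cases "w = 0")
    case True
    have "(\<lambda>k. gc n M \<alpha> \<beta> k * w ^ k) sums Fw n M \<alpha> \<beta> w" using w by (intro Fw_sums) simp
    moreover have "(\<lambda>k. gc n M \<alpha> \<beta> k * w ^ k) = (\<lambda>k. 0)"
      using gz[of 0] True by (auto simp: N_def)
    ultimately have "Fw n M \<alpha> \<beta> w = 0" by (simp add: sums_iff)
    then show ?thesis by (simp add: True N_def)
  next
    case False
    have "(\<lambda>k. gc n M \<alpha> \<beta> k * w ^ k) sums Fw n M \<alpha> \<beta> w" using w by (intro Fw_sums) simp
    hence "(\<lambda>k. gc n M \<alpha> \<beta> (k + N) * w ^ (k + N)) sums (Fw n M \<alpha> \<beta> w - (\<Sum>i<N. gc n M \<alpha> \<beta> i * w ^ i))"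
      by (rule sums_split_initial_segment)
    moreover have "(\<Sum>i<N. gc n M \<alpha> \<beta> i * w ^ i) = 0" using gz by simp
    ultimately have "(\<lambda>k. (g k * w ^ k) * w ^ N) sums Fw n M \<alpha> \<beta> w"
      by (simp add: g_def power_add mult_ac)
    hence "(\<lambda>k. (g k * w ^ k) * w ^ N / w ^ N) sums (Fw n M \<alpha> \<beta> w / w ^ N)"
      by (rule sums_divide)
    hence S: "(\<lambda>k. g k * w ^ k) sums (Fw n M \<alpha> \<beta> w / w ^ N)" using False by simp
    have le: "norm (g k * w ^ k) \<le> norm (g k * (1/2 :: complex) ^ k)" for k
      using w by (simp add: norm_mult norm_power norm_divide mult_left_mono power_mono)
    have sw: "summable (\<lambda>k. norm (g k * w ^ k))"
      by (rule summable_comparison_test[OF _ sn]) (use le in auto)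
    have "norm (Fw n M \<alpha> \<beta> w / w ^ N) = norm (\<Sum>k. g k * w ^ k)" using S by (simp add: sums_iff)
    also have "\<dots> \<le> (\<Sum>k. norm (g k * w ^ k))" by (rule summable_norm[OF sw])
    also have "\<dots> \<le> B" unfolding B_def by (rule suminf_le[OF le sw sn])
    finally have "norm (Fw n M \<alpha> \<beta> w) / norm w ^ N \<le> B" by (simp add: norm_divide norm_power)
    then show ?thesis using False by (simp add: divide_le_eq)
  qed
  then show ?thesis unfolding N_def by blast
qed


lemma Re_pos: "norm (y::complex) < 1 \<Longrightarrow> 0 < Re (1 + y)"
  using abs_Re_le_cmod[of y] by simp

lemma powr_mult_pos:
  fixes u q c :: complex
  assumes "0 < Re u" "0 < Re q"
  shows "(u * q) powr c = u powr c * q powr c"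
proof -
  have nz: "u \<noteq> 0" "q \<noteq> 0" using assms by auto
  have "\<bar>Im (Ln u)\<bar> < pi/2" "\<bar>Im (Ln q)\<bar> < pi/2"
    using Re_Ln_pos_lt_imp assms by auto
  hence "Ln (u * q) = Ln u + Ln q"
    using nz by (intro Ln_times_simple) (auto simp: abs_less_iff)
  then show ?thesis using nz by (simp add: powr_def distrib_left exp_add)
qed

lemma key_identity:
  fixes a b :: rat and z :: complex and M n :: nat
  assumes s: "of_int \<lfloor>a + b\<rfloor> = (of_rat a + of_rat b :: complex)"
    and M: "int M = int n + \<lfloor>a + b\<rfloor>"
    and z: "norm z \<ge> 7"
  shows "halfBranchPow a b z * jacobiJ n (of_rat a) (of_rat b) z - jacobiJ M (- of_rat a) (- of_rat b) z
       = ((z - 1) / 2) ^ M * Fw n M (of_rat a) (of_rat b) (2 / (z - 1))"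
proof -
  define \<alpha> :: complex where "\<alpha> = of_rat a"
  define \<beta> :: complex where "\<beta> = of_rat b"
  define si where "si = \<lfloor>a + b\<rfloor>"
  define t where "t = (z - 1) / 2"
  define w where "w = 2 / (z - 1)"
  define u where "u = 1 - 1 / z"
  define v where "v = 1 + 1 / z"
  define q where "q = 1 + w"
  have z0: "z \<noteq> 0" using z by auto
  have z1: "z - 1 \<noteq> 0" using z by auto
  have t0: "t \<noteq> 0" using z1 by (simp add: t_def)
  have nz: "norm (1 / z) < 1" using z by (simp add: norm_divide divide_less_eq)
  have nz1: "norm (z - 1) \<ge> 6" using norm_triangle_ineq2[of z 1] z by simp
  have nw: "norm w < 1" using nz1 by (simp add: w_def norm_divide divide_less_eq)
  have Reu: "0 < Re u" using Re_pos[of "- (1/z)"] nz by (simp add: u_def)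
  have Req: "0 < Re q" using Re_pos[OF nw] by (simp add: q_def)
  have u0: "u \<noteq> 0" using Reu by auto
  have q0: "q \<noteq> 0" using Req by auto
  have vuq: "v = u * q" using z0 z1 by (simp add: v_def u_def q_def w_def field_simps)
  have tq: "1 + t = t * q" using z1 by (simp add: t_def q_def w_def field_simps)
  have tw: "t * w = 1" using z1 by (simp add: t_def w_def)
  have zu: "z * u = 2 * t" using z0 by (simp add: u_def t_def field_simps)
  have sab: "\<alpha> + \<beta> = of_int si" using s by (simp add: \<alpha>_def \<beta>_def si_def)
  have hb: "halfBranchPow a b z = t powi si * q powr \<beta>"
  proof -
    have "u powr \<alpha> * v powr \<beta> = u powr \<alpha> * (u powr \<beta> * q powr \<beta>)"
      unfolding vuq by (simp add: powr_mult_pos Reu Req)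
    also have "\<dots> = u powr (\<alpha> + \<beta>) * q powr \<beta>" by (simp add: powr_add)
    also have "\<dots> = u powi si * q powr \<beta>" using u0 by (simp add: sab complex_powr_of_int)
    finally have 1: "u powr \<alpha> * v powr \<beta> = u powi si * q powr \<beta>" .
    have "halfBranchPow a b z = 2 powi (- si) * (z powi si * u powr \<alpha> * v powr \<beta>)"
      by (simp add: halfBranchPow_def branchPow_def si_def \<alpha>_def \<beta>_def u_def v_def)
    also have "\<dots> = (z * u / 2) powi si * q powr \<beta>"
      using 1 by (simp add: power_int_minus power_int_mult_distrib power_int_divide_distrib field_simps)
    also have "z * u / 2 = t" using zu by simp
    finally show ?thesis .
  qed
  have hJ: "jacobiJ n \<alpha> \<beta> z = t ^ n * (\<Sum>j\<le>n. Xc n \<alpha> \<beta> j * q ^ (n - j))"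
  proof -
    have "jacobiJ n \<alpha> \<beta> z = (\<Sum>j\<le>n. Xc n \<alpha> \<beta> j * t ^ j * (1 + t) ^ (n - j))"
      unfolding jacobi_alt Xc_def t_def ..
    also have "\<dots> = (\<Sum>j\<le>n. t ^ n * (Xc n \<alpha> \<beta> j * q ^ (n - j)))"
    proof (intro sum.cong refl)
      fix j assume "j \<in> {..n}"
      hence "t ^ j * t ^ (n - j) = t ^ n" by (simp flip: power_add)
      then show "Xc n \<alpha> \<beta> j * t ^ j * (1 + t) ^ (n - j) = t ^ n * (Xc n \<alpha> \<beta> j * q ^ (n - j))"
        unfolding tq power_mult_distrib by (metis mult.assoc mult.commute)
    qed
    finally show ?thesis by (simp add: sum_distrib_left)
  qed
  have M': "si + int n = int M" using M by (simp add: si_def)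
  have first: "halfBranchPow a b z * jacobiJ n \<alpha> \<beta> z
      = t ^ M * (\<Sum>j\<le>n. Xc n \<alpha> \<beta> j * q powr (\<beta> + of_nat (n - j)))"
  proof -
    have "t powi si * t ^ n = t ^ M"
      using t0 by (simp add: power_int_add[symmetric] M' flip: power_int_of_nat)
    moreover have "q powr \<beta> * (\<Sum>j\<le>n. Xc n \<alpha> \<beta> j * q ^ (n - j)) = (\<Sum>j\<le>n. Xc n \<alpha> \<beta> j * q powr (\<beta> + of_nat (n - j)))"
      unfolding sum_distrib_left
    proof (intro sum.cong refl)
      fix j
      have "q powr (\<beta> + of_nat (n - j)) = q powr \<beta> * q ^ (n - j)"
        by (simp only: powr_add powr_nat'[OF disjI1[OF q0]])
      then show "q powr \<beta> * (Xc n \<alpha> \<beta> j * q ^ (n - j)) = Xc n \<alpha> \<beta> j * q powr (\<beta> + of_nat (n - j))"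
        by simp
    qed
    ultimately show ?thesis unfolding hb hJ by (metis mult.assoc mult.commute)
  qed
  have second: "jacobiJ M (- \<alpha>) (- \<beta>) z = t ^ M * (\<Sum>k\<le>M. dc M \<alpha> \<beta> (M - k) * w ^ k)"
  proof -
    have "jacobiJ M (- \<alpha>) (- \<beta>) z = (\<Sum>j\<in>{0..M}. dc M \<alpha> \<beta> j * t ^ j)"
      unfolding jacobiJ_def dc_def t_def ..
    also have "\<dots> = (\<Sum>k\<in>{0..M}. dc M \<alpha> \<beta> (M + 0 - k) * t ^ (M + 0 - k))"
      by (rule sum.atLeastAtMost_rev)
    also have "\<dots> = (\<Sum>k\<le>M. t ^ M * (dc M \<alpha> \<beta> (M - k) * w ^ k))"
    proof (intro sum.cong)
      fix k assume "k \<in> {..M}"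
      hence k: "k \<le> M" by simp
      have "t ^ (M - k) = t ^ M * w ^ k"
        using t0 k tw by (simp add: power_diff w_def t_def field_simps)
      then show "dc M \<alpha> \<beta> (M + 0 - k) * t ^ (M + 0 - k) = t ^ M * (dc M \<alpha> \<beta> (M - k) * w ^ k)" by simp
    qed (simp add: atMost_atLeast0)
    finally show ?thesis by (simp add: sum_distrib_left)
  qed
  show ?thesis
    unfolding \<alpha>_def[symmetric] \<beta>_def[symmetric] first second Fw_def t_def[symmetric] w_def[symmetric] q_def[symmetric]
    by (simp add: right_diff_distrib)
qed


theorem mainTheorem3:
  fixes a b :: rat and n :: nat
  assumes "a + b \<in> \<int>"
    and "of_nat n \<ge> - (a + b)"
  shows "(\<lambda>z. halfBranchPow a b z * jacobiJ n (of_rat a) (of_rat b) z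
              - jacobiJ (nat (int n + \<lfloor>a + b\<rfloor>)) (- of_rat a) (- of_rat b) z)
         \<in> O[at_infinity](\<lambda>z. z powi (- (int n + 1)))"
proof -
  define si where "si = \<lfloor>a + b\<rfloor>"
  have ab: "a + b = of_int si" using assms(1) by (auto simp: si_def elim!: Ints_cases)
  have s: "of_int \<lfloor>a + b\<rfloor> = (of_rat a + of_rat b :: complex)"
  proof -
    have "(of_rat a + of_rat b :: complex) = of_rat (a + b)" by (simp add: of_rat_add)
    also have "\<dots> = of_int si" by (simp add: ab)
    finally show ?thesis by (simp add: si_def)
  qed
  have nn: "int n + si \<ge> 0"
  proof -
    have "(of_int (int n + si) :: rat) \<ge> 0" using assms(2) ab by simp
    then show ?thesis by simp
  qed
  define M where "M = nat (int n + \<lfloor>a + b\<rfloor>)"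
  have M: "int M = int n + \<lfloor>a + b\<rfloor>" using nn by (simp add: M_def si_def)
  have hM: "(of_nat M :: complex) = of_nat n + of_rat a + of_rat b"
  proof -
    have "(of_nat M :: complex) = of_int (int M)" by simp
    also have "\<dots> = of_nat n + of_int \<lfloor>a + b\<rfloor>" unfolding M by simp
    finally show ?thesis using s by (simp add: add.assoc)
  qed
  obtain B0 where B0: "\<And>w. norm w \<le> 1/2 \<Longrightarrow> norm (Fw n M (of_rat a) (of_rat b) w) \<le> B0 * norm w ^ (M + n + 1)"
    using Fw_bound[OF hM] by blast
  define B where "B = max B0 0"
  have Bn: "B \<ge> 0" by (simp add: B_def)
  have Bb: "norm (Fw n M (of_rat a) (of_rat b) w) \<le> B * norm w ^ (M + n + 1)" if "norm w \<le> 1/2" for w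
  proof -
    have "B0 * norm w ^ (M + n + 1) \<le> B * norm w ^ (M + n + 1)"
      by (intro mult_right_mono) (auto simp: B_def)
    then show ?thesis using B0[OF that] by linarith
  qed
  have ev: "\<forall>z::complex. 7 \<le> norm z \<longrightarrow>
      norm (halfBranchPow a b z * jacobiJ n (of_rat a) (of_rat b) z
              - jacobiJ (nat (int n + \<lfloor>a + b\<rfloor>)) (- of_rat a) (- of_rat b) z)
      \<le> (B * 4 ^ (n + 1)) * norm (z powi (- (int n + 1)))"
  proof (intro allI impI)
    fix z :: complex assume z: "7 \<le> norm z"
    define t where "t = (z - 1) / 2"
    define w where "w = 2 / (z - 1)"
    have z1: "z - 1 \<noteq> 0" using z by auto
    have nz1: "norm (z - 1) \<ge> norm z - 1" using norm_triangle_ineq2[of z 1] by simp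
    have nw: "norm w \<le> 1/2" using nz1 z by (simp add: w_def norm_divide divide_le_eq)
    have tw: "norm t * norm w = 1" using z1 by (simp add: t_def w_def norm_divide)
    have h2: "norm z / 2 \<le> norm (z - 1)" using nz1 z by linarith
    have "norm w = 2 / norm (z - 1)" by (simp add: w_def norm_divide)
    also have "\<dots> \<le> 2 / (norm z / 2)"
      by (rule divide_left_mono) (use h2 z in \<open>auto intro!: mult_pos_pos\<close>)
    also have "\<dots> = 4 / norm z" by simp
    finally have nw4: "norm w \<le> 4 / norm z" .
    have "halfBranchPow a b z * jacobiJ n (of_rat a) (of_rat b) z
              - jacobiJ (nat (int n + \<lfloor>a + b\<rfloor>)) (- of_rat a) (- of_rat b) z
          = t ^ M * Fw n M (of_rat a) (of_rat b) w"
      unfolding M_def[symmetric] t_def w_def by (rule key_identity[OF s M z])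
    hence "norm (halfBranchPow a b z * jacobiJ n (of_rat a) (of_rat b) z
              - jacobiJ (nat (int n + \<lfloor>a + b\<rfloor>)) (- of_rat a) (- of_rat b) z)
          = norm t ^ M * norm (Fw n M (of_rat a) (of_rat b) w)" by (simp add: norm_mult norm_power)
    also have "\<dots> \<le> norm t ^ M * (B * norm w ^ (M + n + 1))"
      by (intro mult_left_mono Bb nw) simp
    also have "\<dots> = B * ((norm t * norm w) ^ M * norm w ^ (n + 1))"
      by (simp add: power_add power_mult_distrib mult_ac)
    also have "\<dots> = B * norm w ^ (n + 1)" by (simp add: tw)
    also have "\<dots> \<le> B * (4 / norm z) ^ (n + 1)"
      by (intro mult_left_mono power_mono nw4 Bn) simp
    also have "\<dots> = (B * 4 ^ (n + 1)) * norm (z powi (- (int n + 1)))"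
    proof -
      have e: "int n + 1 = int (n + 1)" by simp
      have "norm (z powi (- (int n + 1))) = inverse (norm z ^ (n + 1))"
        unfolding e power_int_minus power_int_of_nat norm_inverse norm_power by (rule refl)
      then show ?thesis by (simp add: power_divide field_simps)
    qed
    finally show "norm (halfBranchPow a b z * jacobiJ n (of_rat a) (of_rat b) z
              - jacobiJ (nat (int n + \<lfloor>a + b\<rfloor>)) (- of_rat a) (- of_rat b) z)
      \<le> (B * 4 ^ (n + 1)) * norm (z powi (- (int n + 1)))" .
  qed
  show ?thesis
    by (rule bigoI[where c = "B * 4 ^ (n + 1)"]) (use ev in \<open>auto simp: eventually_at_infinity\<close>)
qed

end
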